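(* In the continuous-shock setting below, let $a^*_\pi:=L^{-1}\!\left(\Phi^{-1}\!\left(\frac{\psi-1}{(1+\lambda\sigma)\psi}\right)\right)$. Then (i) exactly two restricted perceptions equilibria exist if and only if $h(a^*_\pi)>a^*_\pi$; (ii) no restricted perceptions equilibrium exists if and only if $h(a^*_\pi)<a^*_\pi$.
   Context: Parameters: $0<\beta<1$, $\sigma,\lambda,\mu>0$, $\psi>1$. The shock follows $\epsilon_t=\rho\epsilon_{t-1}+v_t$ with $\rho\in[0,1)$, $v_t\sim\mathcal N(0,\sigma_v^2)$ i.i.d., so its stationary distribution is $\mathcal N(0,\sigma_\epsilon^2)$ with $\sigma_\epsilon:=\sqrt{\sigma_v^2/(1-\rho^2)}$. Model: $x_t=\hat E_t x_{t+1}-\sigma(i_t-\hat E_t\pi_{t+1})+\epsilon_t$, $\pi_t=\lambda x_t+\beta\hat E_t\pi_{t+1}$, $i_t=\max\{\psi\pi_t,-\mu\}$. Restricted perceptions: agents forecast $\hat E_t\pi_{t+1}=a_\pi$ and $\hat E_t x_{t+1}=\frac{1-\beta}{\lambda}a_\pi$ for a constant $a_\pi\in\mathbb{R}$. Given $a_\pi$, inflation is $\pi_t=(1+\lambda\sigma)a_\pi+\lambda\sigma\mu+\lambda\epsilon_t$ if $\psi\big((1+\lambda\sigma)a_\pi+\lambda\sigma\mu+\lambda\epsilon_t\big)\le-\mu$ (binding zero lower bound), and $\pi_t=\frac{1+\lambda\sigma}{1+\lambda\sigma\psi}a_\pi+\frac{\lambda}{1+\lambda\sigma\psi}\epsilon_t$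 otherwise. Let $h(a_\pi)$ be the mean of $\pi_t$ when $\epsilon_t\sim\mathcal N(0,\sigma_\epsilon^2)$. A restricted perceptions equilibrium is a value $\bar a_\pi\in\mathbb{R}$ with $h(\bar a_\pi)=\bar a_\pi$. $\Phi$ is the standard normal CDF, and $L(a_\pi):=(\sigma_\epsilon\lambda)^{-1}\big(-\mu/\psi-(1+\lambda\sigma)a_\pi-\lambda\sigma\mu\big)$ (an affine bijection of $\mathbb{R}$). *)

theory Defs
  imports "HOL-Probability.Probability"
begin

definition Phi :: "real \<Rightarrow> real" where
  "Phi x = measure (density lborel std_normal_density) {..x}"

text \<open>Inverse of the standard normal CDF (Phi is a bijection onto (0,1)).\<close>
definition Phi_inv :: "real \<Rightarrow> real" where
  "Phi_inv p = (THE z. Phi z = p)"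

text \<open>Stationary standard deviation of the AR(1) shock.\<close>
definition sigma_eps :: "real \<Rightarrow> real \<Rightarrow> real" where
  "sigma_eps sigma_v rho = sqrt (sigma_v\<^sup>2 / (1 - rho\<^sup>2))"

definition infl :: "real \<Rightarrow> real \<Rightarrow> real \<Rightarrow> real \<Rightarrow> real \<Rightarrow> real \<Rightarrow> real" where
  "infl sig lam mu psi a e =
     (if psi * ((1 + lam * sig) * a + lam * sig * mu + lam * e) \<le> - mu
      then (1 + lam * sig) * a + lam * sig * mu + lam * e
      else (1 + lam * sig) / (1 + lam * sig * psi) * a
             + lam / (1 + lam * sig * psi) * e)"

definition hmap :: "real \<Rightarrow> real \<Rightarrow> real \<Rightarrow> real \<Rightarrow> real \<Rightarrow> real \<Rightarrow> real \<Rightarrow> real" where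
  "hmap sig lam mu psi sigma_v rho a =
     integral\<^sup>L (density lborel (normal_density 0 (sigma_eps sigma_v rho)))
       (\<lambda>e. infl sig lam mu psi a e)"

definition Lmap :: "real \<Rightarrow> real \<Rightarrow> real \<Rightarrow> real \<Rightarrow> real \<Rightarrow> real \<Rightarrow> real \<Rightarrow> real" where
  "Lmap sig lam mu psi sigma_v rho a =
     (-mu / psi - (1 + lam * sig) * a - lam * sig * mu) / (sigma_eps sigma_v rho * lam)"

definition Lmap_inv :: "real \<Rightarrow> real \<Rightarrow> real \<Rightarrow> real \<Rightarrow> real \<Rightarrow> real \<Rightarrow> real \<Rightarrow> real" where
  "Lmap_inv sig lam mu psi sigma_v rho z = (THE a. Lmap sig lam mu psi sigma_v rho a = z)"

definition RPE :: "real \<Rightarrow> real \<Rightarrow> real \<Rightarrow> real \<Rightarrow> real \<Rightarrow> real \<Rightarrow> real set" where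
  "RPE sig lam mu psi sigma_v rho = {a. hmap sig lam mu psi sigma_v rho a = a}"

definition a_star :: "real \<Rightarrow> real \<Rightarrow> real \<Rightarrow> real \<Rightarrow> real \<Rightarrow> real \<Rightarrow> real" where
  "a_star sig lam mu psi sigma_v rho =
     Lmap_inv sig lam mu psi sigma_v rho
       (Phi_inv ((psi - 1) / ((1 + lam * sig) * psi)))"

end

theory Submission
  imports Defs
begin


lemma rd_std: "real_distribution (density lborel std_normal_density)"
  unfolding real_distribution_def real_distribution_axioms_def using prob_space_normal_density by auto

lemma Phi_cdf: "Phi = cdf (density lborel std_normal_density)"
  by (rule ext) (simp add: Phi_def cdf_def)

lemma std_bounds:
  fixes x y t :: real
  assumes "x < t" "t \<le> y"
  shows "std_normal_density (\<bar>x\<bar> + \<bar>y\<bar>) \<le> std_normal_density t" "std_normal_density t \<le> 1"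
proof -
  have "\<bar>t\<bar> \<le> \<bar>\<bar>x\<bar> + \<bar>y\<bar>\<bar>" using assms by auto
  then have "t\<^sup>2 \<le> (\<bar>x\<bar> + \<bar>y\<bar>)\<^sup>2"
    by (simp only: abs_le_square_iff)
  then show "std_normal_density (\<bar>x\<bar> + \<bar>y\<bar>) \<le> std_normal_density t"
    unfolding std_normal_density_def by (intro mult_left_mono) auto
  have "1 / sqrt (2*pi) \<le> 1" using pi_gt3 by (simp add: divide_le_eq real_le_rsqrt)
  moreover have "exp (- t\<^sup>2 / 2) \<le> 1" by simp
  ultimately show "std_normal_density t \<le> 1" unfolding std_normal_density_def
    by (intro mult_le_one) auto
qed

lemma Phi_diff_bounds:
  fixes x y :: real assumes "x < y"
  shows "std_normal_density (\<bar>x\<bar> + \<bar>y\<bar>) * (y - x) \<le> Phi y - Phi x"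
        "Phi y - Phi x \<le> y - x"
proof -
  interpret real_distribution "density lborel std_normal_density" by (rule rd_std)
  have d: "Phi y - Phi x = measure (density lborel std_normal_density) {x<..y}"
    unfolding Phi_cdf using cdf_diff_eq[OF assms] .
  have em: "emeasure (density lborel std_normal_density) {x<..y}
     = (\<integral>\<^sup>+ t. ennreal (std_normal_density t) * indicator {x<..y} t \<partial>lborel)"
    by (simp add: emeasure_density)
  define c where "c = std_normal_density (\<bar>x\<bar> + \<bar>y\<bar>)"
  have "(\<integral>\<^sup>+ t. ennreal c * indicator {x<..y} t \<partial>lborel)
        \<le> (\<integral>\<^sup>+ t. ennreal (std_normal_density t) * indicator {x<..y} t \<partial>lborel)"
    by (intro nn_integral_mono) (auto simp: indicator_def c_def intro: std_bounds)
  moreover have "(\<integral>\<^sup>+ t. ennreal c * indicator {x<..y} t \<partial>lborel) = ennreal (c * (y - x))"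
    using assms by (simp add: nn_integral_cmult_indicator ennreal_mult c_def)
  ultimately have "ennreal (c * (y - x)) \<le> ennreal (measure (density lborel std_normal_density) {x<..y})"
    using em emeasure_eq_measure by metis
  then show "std_normal_density (\<bar>x\<bar> + \<bar>y\<bar>) * (y - x) \<le> Phi y - Phi x"
    unfolding d c_def using measure_nonneg[of "density lborel std_normal_density" "{x<..y}"]
    by (simp add: ennreal_le_iff2) linarith
  have "(\<integral>\<^sup>+ t. ennreal (std_normal_density t) * indicator {x<..y} t \<partial>lborel)
        \<le> (\<integral>\<^sup>+ t. ennreal 1 * indicator {x<..y} t \<partial>lborel)"
    by (intro nn_integral_mono) (auto simp: indicator_def intro: std_bounds)
  moreover have "(\<integral>\<^sup>+ t. ennreal 1 * indicator {x<..y} t \<partial>lborel) = ennreal (y - x)"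
    using assms by (simp add: nn_integral_cmult_indicator)
  ultimately have "ennreal (measure (density lborel std_normal_density) {x<..y}) \<le> ennreal (y - x)"
    using em emeasure_eq_measure by metis
  then show "Phi y - Phi x \<le> y - x"
    unfolding d using assms by (simp add: ennreal_le_iff)
qed

lemma Phi_strict: "x < y \<Longrightarrow> Phi x < Phi y"
proof -
  assume a: "x < y"
  have "0 < std_normal_density (\<bar>x\<bar> + \<bar>y\<bar>) * (y - x)"
    using a by (simp add: normal_density_pos)
  with Phi_diff_bounds(1)[OF a] show ?thesis by linarith
qed

lemma Phi_cont: "continuous_on UNIV Phi"
proof -
  have "lipschitz_on 1 UNIV Phi"
  proof (rule lipschitz_onI)
    fix x y :: real
    show "dist (Phi x) (Phi y) \<le> 1 * dist x y"
    proof (cases x y rule: linorder_cases)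
      case less then show ?thesis using Phi_diff_bounds[OF less] Phi_strict[OF less] by (simp add: dist_real_def)
    next
      case greater then show ?thesis using Phi_diff_bounds[OF greater] Phi_strict[OF greater] by (simp add: dist_real_def)
    qed simp
  qed simp
  then show ?thesis by (rule lipschitz_on_continuous_on)
qed

lemma Phi_surj: assumes "0 < p" "p < 1" shows "\<exists>z. Phi z = p"
proof -
  interpret real_distribution "density lborel std_normal_density" by (rule rd_std)
  have "eventually (\<lambda>z. Phi z < p) at_bot"
    using order_tendstoD(2)[OF cdf_lim_at_bot assms(1)] unfolding Phi_cdf .
  then obtain a where a: "Phi a < p" by (auto simp: eventually_at_bot_linorder)
  have "eventually (\<lambda>z. Phi z > p) at_top"
    using order_tendstoD(1)[OF cdf_lim_at_top_prob assms(2)] unfolding Phi_cdf .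
  then obtain b where b: "Phi b > p" by (auto simp: eventually_at_top_linorder)
  have "a < b" using a b Phi_strict by (metis linorder_not_le order_le_less order_less_trans)
  then obtain z where "Phi z = p"
    using IVT'[of Phi a p b] a b Phi_cont continuous_on_subset by (metis less_imp_le subset_UNIV)
  then show ?thesis ..
qed

lemma Phi_Phi_inv: assumes "0 < p" "p < 1" shows "Phi (Phi_inv p) = p"
proof -
  have "\<exists>!z. Phi z = p"
    using Phi_surj[OF assms] Phi_strict by (metis linorder_neq_iff order_less_irrefl)
  then show ?thesis unfolding Phi_inv_def by (rule theI')
qed



lemma N_cdf:
  fixes s z :: real assumes s: "0 < s"
  shows "measure (density lborel (normal_density 0 s)) {..s*z} = Phi z"
proof -
  have eq: "ennreal s * (ennreal (normal_density 0 s (s * x)) * indicator {..s*z} (s * x))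
      = ennreal (std_normal_density x) * indicator {..z} x" for x
  proof -
    have "s * normal_density 0 s (s * x) = std_normal_density x"
      using s by (simp add: normal_density_def real_sqrt_mult power_mult_distrib field_simps)
    moreover have "indicator {..s*z} (s * x) = (indicator {..z} x :: ennreal)"
      using s by (simp add: indicator_def)
    ultimately show ?thesis
      using s by (simp add: ennreal_mult[symmetric] mult.assoc[symmetric])
  qed
  have "emeasure (density lborel (normal_density 0 s)) {..s*z}
      = (\<integral>\<^sup>+ t. ennreal (normal_density 0 s t) * indicator {..s*z} t \<partial>lborel)"
    by (simp add: emeasure_density)
  also have "\<dots> = ennreal \<bar>s\<bar> * (\<integral>\<^sup>+ x. ennreal (normal_density 0 s (0 + s * x)) * indicator {..s*z} (0 + s * x) \<partial>lborel)"
    using s by (intro nn_integral_real_affine) auto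
  also have "\<dots> = (\<integral>\<^sup>+ x. ennreal s * (ennreal (normal_density 0 s (s * x)) * indicator {..s*z} (s * x)) \<partial>lborel)"
    using s by (simp add: nn_integral_cmult)
  also have "\<dots> = (\<integral>\<^sup>+ x. ennreal (std_normal_density x) * indicator {..z} x \<partial>lborel)"
    by (simp only: eq)
  also have "\<dots> = emeasure (density lborel std_normal_density) {..z}"
    by (simp add: emeasure_density)
  finally have fin: "emeasure (density lborel (normal_density 0 s)) {..s*z} = emeasure (density lborel std_normal_density) {..z}" .
  interpret A: prob_space "density lborel (normal_density 0 s)" using prob_space_normal_density s by auto
  interpret B: prob_space "density lborel std_normal_density" using prob_space_normal_density by auto
  from fin show ?thesis unfolding Phi_def
    by (simp add: A.emeasure_eq_measure B.emeasure_eq_measure)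
qed

lemma N_id:
  fixes s :: real assumes s: "0 < s"
  shows "integrable (density lborel (normal_density 0 s)) (\<lambda>e. e)"
        "integral\<^sup>L (density lborel (normal_density 0 s)) (\<lambda>e. e) = 0"
proof -
  show "integrable (density lborel (normal_density 0 s)) (\<lambda>e. e)"
    by (subst integrable_density) (auto simp: integrable_normal_moment_nz_1[OF s])
  show "integral\<^sup>L (density lborel (normal_density 0 s)) (\<lambda>e. e) = 0"
    by (subst integral_density) (auto simp: integral_normal_moment_nz_1[OF s])
qed



lemma min_inc:
  fixes x0 y0 x1 y1 d k K :: real
  assumes "0 \<le> d" "K \<le> k" "x1 = x0 + k*d" "y1 = y0 + K*d"
  shows "min x1 y1 - min x0 y0 \<ge> d * (K + (k - K) * (if x1 \<le> y1 then 1 else 0))"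
        "min x1 y1 - min x0 y0 \<le> d * (K + (k - K) * (if x0 \<le> y0 then 1 else 0))"
proof -
  have m: "K*d \<le> k*d" using assms by (simp add: mult_right_mono)
  show "min x1 y1 - min x0 y0 \<ge> d * (K + (k - K) * (if x1 \<le> y1 then 1 else 0))"
    using assms m by (auto simp: algebra_simps min_def)
  show "min x1 y1 - min x0 y0 \<le> d * (K + (k - K) * (if x0 \<le> y0 then 1 else 0))"
    using assms m by (auto simp: algebra_simps min_def)
qed

context
  fixes sig lam mu psi sigma_v rho k D K s :: real
  assumes pos: "0 < sig" "0 < lam" "0 < mu" "1 < psi" "0 < s"
  and defs: "k = 1 + lam * sig" "D = 1 + lam * sig * psi" "K = k / D" "s = sigma_eps sigma_v rho"
begin

lemma DD_pos: "D > 1" using pos defs by simp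

lemma KK_lt: "K < k" "K < 1" "0 < K"
proof -
  have "k > 0" using pos defs by (simp add: add_pos_pos)
  have "D > k" using pos defs by (simp add: mult_strict_left_mono)
  show "K < k" using DD_pos \<open>k > 0\<close> defs by (simp add: divide_less_eq)
  show "K < 1" using DD_pos \<open>D > k\<close> defs by (simp add: divide_less_eq)
  show "0 < K" using DD_pos \<open>k > 0\<close> defs by simp
qed

lemma zlb_eq: "(psi * (k * a + lam * sig * mu + lam * e) \<le> - mu) \<longleftrightarrow>
   k * a + lam * sig * mu + lam * e \<le> K * a + lam / D * e"
proof -
  define A where "A = k * a + lam * sig * mu + lam * e"
  define B where "B = K * a + lam / D * e"
  have DK: "D * K = k" using DD_pos defs(3) by simp
  have DL: "D * (lam / D) = lam" using DD_pos by simp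
  have DB: "D * B = k * a + lam * e"
    unfolding B_def distrib_left mult.assoc[symmetric] DK DL by simp
  have "D * (A - B) = D * A - (k * a + lam * e)" using DB by (simp add: algebra_simps)
  also have "\<dots> = lam * sig * (psi * A + mu)"
    unfolding A_def defs(1,2) by (simp add: algebra_simps)
  finally have "D * (A - B) = lam * sig * (psi * A + mu)" .
  moreover have "0 < lam * sig" using pos by simp
  ultimately have "(A \<le> B) \<longleftrightarrow> (psi * A + mu \<le> 0)"
    using DD_pos by (smt (verit) mult_pos_pos mult_nonneg_nonneg zero_less_mult_iff mult_le_0_iff)
  then show ?thesis unfolding A_def B_def by linarith
qed

lemma infl_min: "infl sig lam mu psi a e = min (k * a + lam * sig * mu + lam * e) (K * a + lam / D * e)"
  unfolding infl_def using zlb_eq[of a e] defs by (auto simp: min_def)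

lemma zlb_L: "(k * a + lam * sig * mu + lam * e \<le> K * a + lam / D * e) \<longleftrightarrow> e \<le> s * Lmap sig lam mu psi sigma_v rho a"
proof -
  have "s * Lmap sig lam mu psi sigma_v rho a = (- mu / psi - k * a - lam * sig * mu) / lam"
    unfolding Lmap_def using pos defs by (simp add: field_simps)
  moreover have "(psi * (k * a + lam * sig * mu + lam * e) \<le> - mu) \<longleftrightarrow> k * a + lam * sig * mu + lam * e \<le> - mu / psi"
    using pos by (simp add: field_simps)
  moreover have "(e \<le> (- mu / psi - k * a - lam * sig * mu) / lam) \<longleftrightarrow> k * a + lam * sig * mu + lam * e \<le> - mu / psi"
    using pos by (simp add: field_simps)
  ultimately show ?thesis using zlb_eq[of a e] by simp
qed

lemma inc_bounds:
  assumes "a \<le> b"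
  shows "infl sig lam mu psi b e - infl sig lam mu psi a e \<ge> (b - a) * (K + (k - K) * indicator {..s * Lmap sig lam mu psi sigma_v rho b} e)"
        "infl sig lam mu psi b e - infl sig lam mu psi a e \<le> (b - a) * (K + (k - K) * indicator {..s * Lmap sig lam mu psi sigma_v rho a} e)"
proof -
  have i1: "indicator {..s * Lmap sig lam mu psi sigma_v rho b} e = (if k * b + lam * sig * mu + lam * e \<le> K * b + lam / D * e then 1 else (0::real))"
    using zlb_L[of b e] by (simp add: indicator_def)
  have i2: "indicator {..s * Lmap sig lam mu psi sigma_v rho a} e = (if k * a + lam * sig * mu + lam * e \<le> K * a + lam / D * e then 1 else (0::real))"
    using zlb_L[of a e] by (simp add: indicator_def)
  have h1: "k * b + lam * sig * mu + lam * e = (k * a + lam * sig * mu + lam * e) + k * (b - a)" by (simp add: algebra_simps)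
  have h2: "K * b + lam / D * e = (K * a + lam / D * e) + K * (b - a)" by (simp add: algebra_simps)
  show "infl sig lam mu psi b e - infl sig lam mu psi a e \<ge> (b - a) * (K + (k - K) * indicator {..s * Lmap sig lam mu psi sigma_v rho b} e)"
    unfolding infl_min i1 using min_inc(1)[OF _ _ h1 h2] assms KK_lt by simp
  show "infl sig lam mu psi b e - infl sig lam mu psi a e \<le> (b - a) * (K + (k - K) * indicator {..s * Lmap sig lam mu psi sigma_v rho a} e)"
    unfolding infl_min i2 using min_inc(2)[OF _ _ h1 h2] assms KK_lt by simp
qed

end


context
  fixes sig lam mu psi sigma_v rho k D K s :: real
  assumes pos: "0 < sig" "0 < lam" "0 < mu" "1 < psi" "0 < s"
  and defs: "k = 1 + lam * sig" "D = 1 + lam * sig * psi" "K = k / D" "s = sigma_eps sigma_v rho"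
begin

lemma ps: "prob_space (density lborel (normal_density 0 s))"
  using prob_space_normal_density pos by auto

lemma infl_fun: "infl sig lam mu psi a = (\<lambda>e. min (k * a + lam * sig * mu + lam * e) (K * a + lam / D * e))"
  by (rule ext) (rule infl_min[OF pos defs])

lemma lin_int: "integrable (density lborel (normal_density 0 s)) (\<lambda>e. c1 + c2 * e)"
        "integral\<^sup>L (density lborel (normal_density 0 s)) (\<lambda>e. c1 + c2 * e) = c1"
proof -
  interpret prob_space "density lborel (normal_density 0 s)" by (rule ps)
  show "integrable (density lborel (normal_density 0 s)) (\<lambda>e. c1 + c2 * e)"
    using N_id(1)[OF pos(5)] by auto
  then show "integral\<^sup>L (density lborel (normal_density 0 s)) (\<lambda>e. c1 + c2 * e) = c1"
    using N_id[OF pos(5)] prob_space by (simp add: integral_add)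
qed

lemma infl_int: "integrable (density lborel (normal_density 0 s)) (infl sig lam mu psi a)"
  unfolding infl_fun
  using lin_int(1)[of "k * a + lam * sig * mu" lam] lin_int(1)[of "K * a" "lam / D"]
  by (intro integrable_min) (simp_all add: add.assoc)

lemma hmap_eq: "hmap sig lam mu psi sigma_v rho a = integral\<^sup>L (density lborel (normal_density 0 s)) (infl sig lam mu psi a)"
  unfolding hmap_def defs(4) ..

lemma h_upper: "hmap sig lam mu psi sigma_v rho a \<le> K * a"
               "hmap sig lam mu psi sigma_v rho a \<le> k * a + lam * sig * mu"
proof -
  have "hmap sig lam mu psi sigma_v rho a \<le> integral\<^sup>L (density lborel (normal_density 0 s)) (\<lambda>e. K * a + lam / D * e)"
    unfolding hmap_eq by (intro integral_mono infl_int lin_int) (simp add: infl_fun)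
  then show "hmap sig lam mu psi sigma_v rho a \<le> K * a" using lin_int(2)[of "K * a" "lam / D"] by linarith
  have "hmap sig lam mu psi sigma_v rho a \<le> integral\<^sup>L (density lborel (normal_density 0 s)) (\<lambda>e. (k * a + lam * sig * mu) + lam * e)"
    unfolding hmap_eq by (intro integral_mono infl_int lin_int) (simp add: infl_fun)
  then show "hmap sig lam mu psi sigma_v rho a \<le> k * a + lam * sig * mu" using lin_int(2)[of "k * a + lam * sig * mu" lam] by linarith
qed

lemma h_inc:
  assumes "a \<le> b"
  shows "hmap sig lam mu psi sigma_v rho b - hmap sig lam mu psi sigma_v rho a \<ge> (b - a) * (K + (k - K) * Phi (Lmap sig lam mu psi sigma_v rho b))"
        "hmap sig lam mu psi sigma_v rho b - hmap sig lam mu psi sigma_v rho a \<le> (b - a) * (K + (k - K) * Phi (Lmap sig lam mu psi sigma_v rho a))"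
proof -
  interpret prob_space "density lborel (normal_density 0 s)" by (rule ps)
  let ?N = "density lborel (normal_density 0 s)"
  have diff: "hmap sig lam mu psi sigma_v rho b - hmap sig lam mu psi sigma_v rho a
     = integral\<^sup>L ?N (\<lambda>e. infl sig lam mu psi b e - infl sig lam mu psi a e)"
    unfolding hmap_eq by (simp add: Bochner_Integration.integral_diff infl_int)
  have ind: "integrable ?N (\<lambda>e. (b - a) * (K + (k - K) * indicator {..s * z} e))"
    and indv: "integral\<^sup>L ?N (\<lambda>e. (b - a) * (K + (k - K) * indicator {..s * z} e)) = (b - a) * (K + (k - K) * Phi z)" for z
  proof -
    have i: "integrable ?N (indicator {..s * z} :: real \<Rightarrow> real)"
      by (intro integrable_real_indicator) (auto simp: emeasure_eq_measure)
    show "integrable ?N (\<lambda>e. (b - a) * (K + (k - K) * indicator {..s * z} e))"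
      using i by auto
    have "integral\<^sup>L ?N (\<lambda>e. (b - a) * (K + (k - K) * indicator {..s * z} e))
       = (b - a) * (K + (k - K) * integral\<^sup>L ?N (indicator {..s * z}))"
      using i prob_space by (simp add: integral_add)
    also have "integral\<^sup>L ?N (indicator {..s * z}) = Phi z"
      using N_cdf[OF pos(5)] by simp
    finally show "integral\<^sup>L ?N (\<lambda>e. (b - a) * (K + (k - K) * indicator {..s * z} e)) = (b - a) * (K + (k - K) * Phi z)" .
  qed
  show "hmap sig lam mu psi sigma_v rho b - hmap sig lam mu psi sigma_v rho a \<ge> (b - a) * (K + (k - K) * Phi (Lmap sig lam mu psi sigma_v rho b))"
    unfolding diff indv[symmetric]
    by (intro integral_mono ind Bochner_Integration.integrable_diff infl_int inc_bounds(1)[OF pos defs assms])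
  show "hmap sig lam mu psi sigma_v rho b - hmap sig lam mu psi sigma_v rho a \<le> (b - a) * (K + (k - K) * Phi (Lmap sig lam mu psi sigma_v rho a))"
    unfolding diff indv[symmetric]
    by (intro integral_mono ind Bochner_Integration.integrable_diff infl_int inc_bounds(2)[OF pos defs assms])
qed

end


lemma Phi_01: "0 \<le> Phi z" "Phi z \<le> 1"
proof -
  interpret prob_space "density lborel std_normal_density" using prob_space_normal_density by auto
  show "0 \<le> Phi z" "Phi z \<le> 1" unfolding Phi_def by auto
qed

lemma Phi_mono: "x \<le> y \<Longrightarrow> Phi x \<le> Phi y"
  using Phi_strict by (cases "x = y") (auto intro: less_imp_le)

theorem proposition14:
  fixes beta sig lam mu psi sigma_v rho :: real
  assumes "0 < beta" "beta < 1" "0 < sig" "0 < lam" "0 < mu" "1 < psi"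
    and "0 \<le> rho" "rho < 1" "0 < sigma_v"
  shows "(card (RPE sig lam mu psi sigma_v rho) = 2 \<longleftrightarrow>
           hmap sig lam mu psi sigma_v rho (a_star sig lam mu psi sigma_v rho)
             > a_star sig lam mu psi sigma_v rho)
       \<and> (RPE sig lam mu psi sigma_v rho = {} \<longleftrightarrow>
           hmap sig lam mu psi sigma_v rho (a_star sig lam mu psi sigma_v rho)
             < a_star sig lam mu psi sigma_v rho)"
proof -
  define s where "s = sigma_eps sigma_v rho"
  define k where "k = 1 + lam * sig"
  define D where "D = 1 + lam * sig * psi"
  define K where "K = k / D"
  define h where "h = hmap sig lam mu psi sigma_v rho"
  define L where "L = Lmap sig lam mu psi sigma_v rho"
  define g where "g x = h x - x" for x
  define p where "p = (psi - 1) / (k * psi)"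
  define z0 where "z0 = Phi_inv p"
  define a0 where "a0 = a_star sig lam mu psi sigma_v rho"
  have "rho\<^sup>2 < 1" using assms(7,8) by (simp add: power_less_one_iff abs_if)
  then have s_pos: "0 < s" unfolding s_def sigma_eps_def using assms(9) by simp
  have pos: "0 < sig" "0 < lam" "0 < mu" "1 < psi" "0 < s" using assms s_pos by auto
  note defs = k_def D_def K_def s_def
  have "0 < lam * sig" using pos by simp
  then have k_pos: "0 < k" "1 < k" unfolding k_def by auto
  have p01: "0 < p" "p < 1" unfolding p_def using pos k_pos
    by (auto simp: divide_less_eq) (smt (verit) mult_less_cancel_right2)
  have Pz0: "Phi z0 = p" unfolding z0_def by (rule Phi_Phi_inv[OF p01])
  define C where "C = - mu / psi - lam * sig * mu"
  have Lform: "L a = (C - k * a) / (s * lam)" for a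
    unfolding L_def Lmap_def s_def[symmetric] k_def C_def by simp
  have sl: "0 < s * lam" using pos by simp
  have Lsol: "L a = z \<longleftrightarrow> a = (C - z * (s * lam)) / k" for a z
  proof -
    have "L a = z \<longleftrightarrow> C - k * a = z * (s * lam)" unfolding Lform using pos by (simp add: divide_eq_eq)
    also have "\<dots> \<longleftrightarrow> a = (C - z * (s * lam)) / k" using k_pos by (auto simp: eq_divide_eq algebra_simps)
    finally show ?thesis .
  qed
  have La0: "L a0 = z0"
  proof -
    have "\<exists>!a. L a = z0" using Lsol by auto
    then have "L (THE a. L a = z0) = z0" by (rule theI')
    then show ?thesis unfolding a0_def a_star_def Lmap_inv_def L_def z0_def p_def k_def .
  qed
  have L_strict: "a < b \<Longrightarrow> L b < L a" for a b
    unfolding Lform using sl k_pos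
    by (intro divide_strict_right_mono) auto
  have key: "K - 1 + (k - K) * p = 0"
  proof -
    have Dp: "0 < D" unfolding D_def using pos by (simp add: add_pos_pos)
    have DK: "D * K = k" unfolding K_def using Dp by simp
    have e1: "D * (k - K) = k * (lam * sig * psi)" using DK unfolding D_def by (simp add: algebra_simps)
    have e2: "D * (1 - K) = lam * sig * (psi - 1)" using DK unfolding D_def k_def by (simp add: algebra_simps)
    have e3: "k * (lam * sig * psi) * p = lam * sig * (psi - 1)"
      unfolding p_def using k_pos pos by (simp add: field_simps)
    have "D * (K - 1 + (k - K) * p) = - (D * (1 - K)) + (D * (k - K)) * p"
      by (simp add: algebra_simps)
    also have "\<dots> = 0" unfolding e1 e2 e3 by simp
    finally have "D * (K - 1 + (k - K) * p) = 0" .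
    then show ?thesis using Dp by simp
  qed
  note hinc = h_inc[OF pos defs, folded h_def L_def]
  note hup = h_upper[OF pos defs, folded h_def]
  note KL = KK_lt[OF pos defs]
  have weak_inc: "g a \<le> g b" if "a \<le> b" "b \<le> a0" for a b
  proof -
    have "L b \<ge> z0" using La0 L_strict[of b a0] that by (cases "b = a0") auto
    then have "Phi (L b) \<ge> p" using Phi_mono Pz0 by metis
    then have "K - 1 + (k - K) * Phi (L b) \<ge> 0" using key KL by (smt (verit) mult_left_mono)
    then have "(b - a) * (K - 1 + (k - K) * Phi (L b)) \<ge> 0" using that by simp
    then show ?thesis using hinc(1)[OF that(1)] unfolding g_def by (simp add: algebra_simps)
  qed
  have strict_inc0: "g a < g b" if "a < b" "b < a0" for a b
  proof -
    have "L b > z0" using La0 L_strict[of b a0] that by auto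
    then have "Phi (L b) > p" using Phi_strict Pz0 by metis
    then have "K - 1 + (k - K) * Phi (L b) > 0" using key KL by (smt (verit) mult_strict_left_mono)
    then have "(b - a) * (K - 1 + (k - K) * Phi (L b)) > 0" using that by simp
    then show ?thesis using hinc(1)[of a b] that unfolding g_def by (simp add: algebra_simps)
  qed
  have strict_inc: "g a < g b" if "a < b" "b \<le> a0" for a b
    using strict_inc0[of a "(a+b)/2"] weak_inc[of "(a+b)/2" b] that by auto
  have weak_dec: "g b \<le> g a" if "a \<le> b" "a0 \<le> a" for a b
  proof -
    have "L a \<le> z0" using La0 L_strict[of a0 a] that by (cases "a = a0") auto
    then have "Phi (L a) \<le> p" using Phi_mono Pz0 by metis
    then have "K - 1 + (k - K) * Phi (L a) \<le> 0" using key KL by (smt (verit) mult_left_mono)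
    then have "(b - a) * (K - 1 + (k - K) * Phi (L a)) \<le> 0" using that by (simp add: mult_nonneg_nonpos)
    then show ?thesis using hinc(2)[OF that(1)] unfolding g_def by (simp add: algebra_simps)
  qed
  have strict_dec0: "g b < g a" if "a < b" "a0 < a" for a b
  proof -
    have "L a < z0" using La0 L_strict[of a0 a] that by auto
    then have "Phi (L a) < p" using Phi_strict Pz0 by metis
    then have "K - 1 + (k - K) * Phi (L a) < 0" using key KL by (smt (verit) mult_strict_left_mono)
    then have "(b - a) * (K - 1 + (k - K) * Phi (L a)) < 0" using that by (simp add: mult_pos_neg)
    then show ?thesis using hinc(2)[of a b] that unfolding g_def by (simp add: algebra_simps)
  qed
  have strict_dec: "g b < g a" if "a < b" "a0 \<le> a" for a b
    using strict_dec0[of "(a+b)/2" b] weak_dec[of a "(a+b)/2"] that by auto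
  have gmax: "g x < g a0" if "x \<noteq> a0" for x
    using strict_inc[of x a0] strict_dec[of a0 x] that by (cases "x < a0") auto
  have cont: "continuous_on UNIV g"
  proof -
    have "lipschitz_on (k + 1) UNIV g"
    proof (rule lipschitz_onI)
      fix x y :: real
      have b: "\<bar>h b - h a\<bar> \<le> k * (b - a)" if "a \<le> b" for a b
      proof -
        have "(b - a) * (K + (k - K) * Phi (L b)) \<ge> 0"
          using that KL Phi_01 by (intro mult_nonneg_nonneg) auto
        moreover have "(k - K) * Phi (L a) \<le> (k - K) * 1"
          using KL Phi_01[of "L a"] by (intro mult_left_mono) auto
        then have "(b - a) * (K + (k - K) * Phi (L a)) \<le> (b - a) * k"
          using that by (intro mult_left_mono) auto
        ultimately show ?thesis using hinc[OF that] by (simp add: algebra_simps)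
      qed
      show "dist (g x) (g y) \<le> (k + 1) * dist x y"
        unfolding g_def dist_real_def using b[of x y] b[of y x]
        by (cases "x \<le> y") (auto simp: abs_minus_commute algebra_simps abs_le_iff)
    qed (use k_pos in simp)
    then show ?thesis by (rule lipschitz_on_continuous_on)
  qed
  define a1 where "a1 = min (a0 - 1) (- mu - 1)"
  define a2 where "a2 = max (a0 + 1) 1"
  have ga1: "g a1 < 0"
  proof -
    have "g a1 \<le> lam * sig * (a1 + mu)" using hup(2)[of a1] unfolding g_def k_def by (simp add: algebra_simps)
    moreover have "lam * sig * (a1 + mu) < 0" using pos unfolding a1_def by (intro mult_pos_neg) auto
    ultimately show ?thesis by linarith
  qed
  have ga2: "g a2 < 0"
  proof -
    have "g a2 \<le> (K - 1) * a2" using hup(1)[of a2] unfolding g_def by (simp add: algebra_simps)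
    moreover have "(K - 1) * a2 < 0" using KL unfolding a2_def by (intro mult_neg_pos) auto
    ultimately show ?thesis by linarith
  qed
  have a1a0: "a1 < a0" and a0a2: "a0 < a2" unfolding a1_def a2_def by auto
  have RPE_eq: "RPE sig lam mu psi sigma_v rho = {x. g x = 0}"
    unfolding RPE_def g_def h_def by auto
  have goal_h: "h a0 > a0 \<longleftrightarrow> g a0 > 0" "h a0 < a0 \<longleftrightarrow> g a0 < 0" unfolding g_def by auto
  consider "g a0 > 0" | "g a0 = 0" | "g a0 < 0" by linarith
  then show ?thesis
  proof cases
    case 1
    obtain r1 where r1: "a1 \<le> r1" "r1 \<le> a0" "g r1 = 0"
      using IVT'[of g a1 0 a0] ga1 1 a1a0 cont continuous_on_subset by fastforce
    obtain r2 where r2: "a0 \<le> r2" "r2 \<le> a2" "g r2 = 0"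
      using IVT2'[of g a2 0 a0] ga2 1 a0a2 cont continuous_on_subset by fastforce
    have r1a: "r1 < a0" using r1 1 by (cases "r1 = a0") auto
    have r2a: "a0 < r2" using r2 1 by (cases "r2 = a0") auto
    have "{x. g x = 0} = {r1, r2}"
    proof (intro equalityI subsetI)
      fix x assume "x \<in> {x. g x = 0}"
      then have gx: "g x = 0" by simp
      have "x = r1 \<or> x = r2"
      proof (cases "x \<le> a0")
        case True
        then show ?thesis using strict_inc[of x r1] strict_inc[of r1 x] r1 r1a gx
          by (cases x r1 rule: linorder_cases) auto
      next
        case False
        then show ?thesis using strict_dec[of x r2] strict_dec[of r2 x] r2 r2a gx
          by (cases x r2 rule: linorder_cases) auto
      qed
      then show "x \<in> {r1, r2}" by auto
    qed (use r1 r2 in auto)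
    moreover have "r1 \<noteq> r2" using r1a r2a by auto
    ultimately have "card (RPE sig lam mu psi sigma_v rho) = 2" "RPE sig lam mu psi sigma_v rho \<noteq> {}"
      unfolding RPE_eq by auto
    then show ?thesis using 1 unfolding a0_def[symmetric] h_def[symmetric] goal_h by auto
  next
    case 2
    have "{x. g x = 0} = {a0}" using gmax 2 by (auto, metis less_irrefl)
    then have "card (RPE sig lam mu psi sigma_v rho) = 1" "RPE sig lam mu psi sigma_v rho \<noteq> {}"
      unfolding RPE_eq by auto
    then show ?thesis using 2 unfolding a0_def[symmetric] h_def[symmetric] goal_h by auto
  next
    case 3
    have "{x. g x = 0} = {}" using gmax 3 by (auto simp: not_less_iff_gr_or_eq) (smt (verit))
    then have "RPE sig lam mu psi sigma_v rho = {}" unfolding RPE_eq .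
    then show ?thesis using 3 unfolding a0_def[symmetric] h_def[symmetric] goal_h by auto
  qed
qed


end
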